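(* Let $k\in\{1,2\}$, $\beta\in\mathbb{R}\setminus\{0\}$, $h>0$, let $\varphi^h\in\ell^2_h(\mathbb{Z})$ be real-valued and let $u^h$ be the solution of $$\frac{d}{dt}u^h_j + D_+D_0D_-u^h_j + \beta\frac{k+1}{k+2}\Big[(u^h_j)^k D_0u^h_j + D_0\big((u^h)^{k+1}\big)_j\Big] + h\,(D_+D_-D_+D_-u^h)_j=0,\quad j\in\mathbb{Z},\qquad u^h(0)=\varphi^h.$$ Then for all $t>0$, $\|u^h(t)\|_{2,h}\le\|\varphi^h\|_{2,h}$. In particular $u^h$ is a global solution.
   Context: $x_j=jh$; $\ell^2_h(\mathbb{Z})$ is the space of sequences with $\|z\|_{2,h}^2=\sum_j h|z_j|^2<\infty$. $D_+u_j=(u_{j+1}-u_j)/h$, $D_-u_j=(u_j-u_{j-1})/h$, $D_0u_j=(u_{j+1}-u_{j-1})/(2h)$; powers of sequences are componentwise. *)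

theory Defs
  imports "HOL-Analysis.Analysis"
begin

text \<open>Grid sequences are functions int => real (index j corresponds to x_j = j h).\<close>

definition l2h :: "(int \<Rightarrow> real) \<Rightarrow> bool" where
  "l2h z \<longleftrightarrow> (\<lambda>j. (z j)^2) summable_on UNIV"

definition norm2h :: "real \<Rightarrow> (int \<Rightarrow> real) \<Rightarrow> real" where
  "norm2h h z = sqrt (infsum (\<lambda>j. h * (z j)^2) UNIV)"

definition Dp :: "real \<Rightarrow> (int \<Rightarrow> real) \<Rightarrow> int \<Rightarrow> real" where
  "Dp h u j = (u (j+1) - u j) / h"

definition Dm :: "real \<Rightarrow> (int \<Rightarrow> real) \<Rightarrow> int \<Rightarrow> real" where
  "Dm h u j = (u j - u (j-1)) / h"

definition D0 :: "real \<Rightarrow> (int \<Rightarrow> real) \<Rightarrow> int \<Rightarrow> real" where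
  "D0 h u j = (u (j+1) - u (j-1)) / (2*h)"

definition Fh :: "nat \<Rightarrow> real \<Rightarrow> real \<Rightarrow> (int \<Rightarrow> real) \<Rightarrow> int \<Rightarrow> real" where
  "Fh k \<beta> h u j =
     Dp h (D0 h (Dm h u)) j
     + \<beta> * (real k + 1) / (real k + 2) * ((u j)^k * D0 h u j + D0 h (\<lambda>i. (u i)^(k+1)) j)
     + h * Dp h (Dm h (Dp h (Dm h u))) j"

definition has_l2h_deriv ::
  "real \<Rightarrow> (real \<Rightarrow> int \<Rightarrow> real) \<Rightarrow> (int \<Rightarrow> real) \<Rightarrow> real \<Rightarrow> real set \<Rightarrow> bool" where
  "has_l2h_deriv h u v t S \<longleftrightarrow> l2h v \<and>
     ((\<lambda>s. norm2h h (\<lambda>j. (u s j - u t j) / (s - t) - v j)) \<longlongrightarrow> 0) (at t within S)"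

definition is_solution ::
  "nat \<Rightarrow> real \<Rightarrow> real \<Rightarrow> (int \<Rightarrow> real) \<Rightarrow> real set \<Rightarrow> (real \<Rightarrow> int \<Rightarrow> real) \<Rightarrow> bool" where
  "is_solution k \<beta> h \<phi> I u \<longleftrightarrow> u 0 = \<phi> \<and>
     (\<forall>t\<in>I. l2h (u t) \<and> has_l2h_deriv h u (\<lambda>j. - Fh k \<beta> h (u t) j) t I)"

end

theory Submission
  imports Defs "HOL-Analysis.Analysis"
begin


definition sqs :: "(int \<Rightarrow> real) \<Rightarrow> bool" where
  "sqs f \<longleftrightarrow> (\<lambda>j. (f j)^2) summable_on UNIV"

lemma sqs_zero: "sqs (\<lambda>_. 0)"
  by (simp add: sqs_def)

lemma sqs_add: assumes "sqs f" "sqs g" shows "sqs (\<lambda>j. f j + g j)"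
proof -
  have "(\<lambda>j. 2 * (f j)^2 + 2 * (g j)^2) summable_on UNIV"
    using assms unfolding sqs_def
    by (intro summable_on_add summable_on_cmult_right) auto
  moreover have "(f j + g j)^2 \<le> 2 * (f j)^2 + 2 * (g j)^2" for j
  proof -
    have "0 \<le> (f j - g j)^2" by simp
    then show ?thesis unfolding power2_diff power2_sum by linarith
  qed
  ultimately show ?thesis unfolding sqs_def
    by (rule summable_on_comparison_test) auto
qed

lemma sqs_scale: assumes "sqs f" shows "sqs (\<lambda>j. c * f j)"
proof -
  have "(\<lambda>j. c^2 * (f j)^2) summable_on UNIV"
    using assms unfolding sqs_def by (intro summable_on_cmult_right) auto
  then show ?thesis unfolding sqs_def by (simp add: power_mult_distrib)
qed

lemma sqs_uminus: assumes "sqs f" shows "sqs (\<lambda>j. - f j)"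
  using sqs_scale[OF assms, of "-1"] by simp

lemma sqs_diff: assumes "sqs f" "sqs g" shows "sqs (\<lambda>j. f j - g j)"
  using sqs_add[OF assms(1) sqs_uminus[OF assms(2)]] by simp

lemma sqs_prod_summable: assumes "sqs f" "sqs g"
  shows "(\<lambda>j. f j * g j) summable_on UNIV"
proof -
  have s: "(\<lambda>j. (f j)^2 + (g j)^2) summable_on UNIV"
    using assms unfolding sqs_def by (intro summable_on_add) auto
  have "(\<lambda>j. norm (f j * g j)) summable_on UNIV"
  proof (rule summable_on_comparison_test[OF s])
    show "norm (f j * g j) \<le> (f j)^2 + (g j)^2" for j
    proof -
      have "0 \<le> (\<bar>f j\<bar> - \<bar>g j\<bar>)^2" by simp
      then have "2 * (\<bar>f j\<bar> * \<bar>g j\<bar>) \<le> (f j)^2 + (g j)^2" unfolding power2_diff power2_abs by linarith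
      moreover have "0 \<le> \<bar>f j\<bar> * \<bar>g j\<bar>" by simp
      ultimately show ?thesis unfolding real_norm_def abs_mult by linarith
    qed
  qed auto
  then show ?thesis using summable_on_iff_abs_summable_on_real by blast
qed

lemma sqs_le_infsum: assumes "sqs f" shows "(f j)^2 \<le> infsum (\<lambda>j. (f j)^2) UNIV"
proof -
  have "sum (\<lambda>j. (f j)^2) {j} \<le> infsum (\<lambda>j. (f j)^2) UNIV"
    using assms unfolding sqs_def by (intro finite_sum_le_infsum) auto
  then show ?thesis by simp
qed

lemma sqs_mult: assumes "sqs f" "sqs g" shows "sqs (\<lambda>j. f j * g j)"
proof -
  let ?C = "infsum (\<lambda>j. (f j)^2) UNIV"
  have "(\<lambda>j. ?C * (g j)^2) summable_on UNIV"
    using assms unfolding sqs_def by (intro summable_on_cmult_right) auto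
  moreover have "(f j * g j)^2 \<le> ?C * (g j)^2" for j
    using sqs_le_infsum[OF assms(1), of j] by (simp add: power_mult_distrib mult_right_mono)
  ultimately show ?thesis unfolding sqs_def
    by (rule summable_on_comparison_test) auto
qed

lemma bij_shift: "bij_betw (\<lambda>j::int. j + n) UNIV UNIV"
  by (rule bij_betwI[where g="\<lambda>j. j - n"]) auto

lemma sqs_shift: assumes "sqs f" shows "sqs (\<lambda>j. f (j + n))"
  using assms unfolding sqs_def
  using summable_on_reindex_bij_betw[OF bij_shift[of n], of "\<lambda>j. (f j)^2"] by simp

lemma infsum_shift: "infsum (\<lambda>j. g (j + n)) UNIV = infsum g (UNIV::int set)"
  using infsum_reindex_bij_betw[OF bij_shift[of n], of g] by simp

typedef ell2 = "{f::int\<Rightarrow>real. sqs f}" morphisms vec Abs_ell2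
  by (rule exI[of _ "\<lambda>_. 0"]) (simp add: sqs_zero)

setup_lifting type_definition_ell2

lemma sqs_vec[simp]: "sqs (vec x)"
  using vec by simp

instantiation ell2 :: real_vector
begin
lift_definition zero_ell2 :: ell2 is "\<lambda>_. 0" by (simp add: sqs_zero)
lift_definition plus_ell2 :: "ell2 \<Rightarrow> ell2 \<Rightarrow> ell2" is "\<lambda>f g j. f j + g j" by (simp add: sqs_add)
lift_definition uminus_ell2 :: "ell2 \<Rightarrow> ell2" is "\<lambda>f j. - f j" by (simp add: sqs_uminus)
lift_definition minus_ell2 :: "ell2 \<Rightarrow> ell2 \<Rightarrow> ell2" is "\<lambda>f g j. f j - g j" by (simp add: sqs_diff)
lift_definition scaleR_ell2 :: "real \<Rightarrow> ell2 \<Rightarrow> ell2" is "\<lambda>c f j. c * f j" by (simp add: sqs_scale)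
instance
  by standard (transfer; auto simp: algebra_simps)+
end

lemmas vec_ops[simp] = zero_ell2.rep_eq plus_ell2.rep_eq uminus_ell2.rep_eq minus_ell2.rep_eq scaleR_ell2.rep_eq

lemma ell2_eqI: "(\<And>j. vec x j = vec y j) \<Longrightarrow> x = y"
  by (metis vec_inject ext)

instantiation ell2 :: real_inner
begin
definition inner_ell2 :: "ell2 \<Rightarrow> ell2 \<Rightarrow> real" where
  "inner_ell2 x y = infsum (\<lambda>j. vec x j * vec y j) UNIV"
definition norm_ell2 :: "ell2 \<Rightarrow> real" where
  "norm_ell2 x = sqrt (inner x x)"
definition sgn_ell2 :: "ell2 \<Rightarrow> ell2" where
  "sgn_ell2 x = x /\<^sub>R norm x"
definition dist_ell2 :: "ell2 \<Rightarrow> ell2 \<Rightarrow> real" where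
  "dist_ell2 x y = norm (x - y)"
definition uniformity_ell2 :: "(ell2 \<times> ell2) filter" where
  "uniformity_ell2 = (INF e\<in>{0 <..}. principal {(x, y). dist x y < e})"
definition open_ell2 :: "ell2 set \<Rightarrow> bool" where
  "open_ell2 U = (\<forall>x\<in>U. \<forall>\<^sub>F (x', y) in uniformity. x' = x \<longrightarrow> y \<in> U)"
instance
proof
  fix x y z :: ell2 and r :: real
  show "inner x y = inner y x" unfolding inner_ell2_def by (simp add: mult.commute)
  show "inner (x + y) z = inner x z + inner y z" unfolding inner_ell2_def
    by (simp add: distrib_right infsum_add sqs_prod_summable)
  show "inner (r *\<^sub>R x) y = r * inner x y" unfolding inner_ell2_def
    by (simp add: mult.assoc infsum_cmult_right sqs_prod_summable)
  show "0 \<le> inner x x" unfolding inner_ell2_def by (intro infsum_nonneg) simp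
  show "inner x x = 0 \<longleftrightarrow> x = 0"
  proof
    assume "inner x x = 0"
    then have "vec x j * vec x j = 0" for j unfolding inner_ell2_def
      by (intro nonneg_infsum_le_0D[of _ UNIV]) (auto simp: sqs_prod_summable)
    then show "x = 0" by (intro ell2_eqI) simp
  next
    assume "x = 0" then show "inner x x = 0" unfolding inner_ell2_def by simp
  qed
  show "norm x = sqrt (inner x x)" by (rule norm_ell2_def)
qed (rule sgn_ell2_def dist_ell2_def uniformity_ell2_def open_ell2_def)+
end

lemma inner_ell2_sq: "inner x x = infsum (\<lambda>j. (vec x j)^2) UNIV"
  by (simp add: inner_ell2_def power2_eq_square)

lemma vec_le_norm: "\<bar>vec x j\<bar> \<le> norm x"
proof -
  have "(vec x j)^2 \<le> (norm x)^2"
    using sqs_le_infsum[OF sqs_vec[of x], of j] by (simp add: power2_norm_eq_inner inner_ell2_sq)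
  then have "sqrt ((vec x j)^2) \<le> sqrt ((norm x)^2)" by (rule real_sqrt_le_mono)
  then show ?thesis by simp
qed


lemma abs_vec_diff_le: "\<bar>vec x j - vec y j\<bar> \<le> dist x y"
  using vec_le_norm[of "x - y" j] by (simp add: dist_norm)

lemma norm_sq_ell2: "(norm x)^2 = infsum (\<lambda>j. (vec x j)^2) UNIV"
  by (simp add: power2_norm_eq_inner inner_ell2_sq)

instance ell2 :: complete_space
proof
  fix X :: "nat \<Rightarrow> ell2" assume C: "Cauchy X"
  have pc: "Cauchy (\<lambda>n. vec (X n) j)" for j
  proof (rule metric_CauchyI)
    fix e :: real assume "0 < e"
    then obtain M where "\<forall>m\<ge>M. \<forall>n\<ge>M. dist (X m) (X n) < e" using metric_CauchyD[OF C] by blast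
    then show "\<exists>M. \<forall>m\<ge>M. \<forall>n\<ge>M. dist (vec (X m) j) (vec (X n) j) < e"
      using abs_vec_diff_le by (metis dist_real_def order_le_less_trans)
  qed
  define y where "y j = lim (\<lambda>n. vec (X n) j)" for j
  have y: "(\<lambda>n. vec (X n) j) \<longlonglongrightarrow> y j" for j
    using pc[of j] unfolding y_def Cauchy_convergent_iff convergent_LIMSEQ_iff .
  have key: "\<exists>N. \<forall>n\<ge>N. sqs (\<lambda>j. vec (X n) j - y j) \<and> infsum (\<lambda>j. (vec (X n) j - y j)^2) UNIV \<le> e^2"
    if "e > 0" for e
  proof -
    obtain N where N: "\<forall>m\<ge>N. \<forall>n\<ge>N. dist (X m) (X n) < e" using metric_CauchyD[OF C \<open>e>0\<close>] by blast
    have fin: "sum (\<lambda>j. (vec (X n) j - y j)^2) F \<le> e^2" if "n \<ge> N" "finite F" for n F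
    proof (rule LIMSEQ_le_const2)
      show "(\<lambda>m. sum (\<lambda>j. (vec (X n) j - vec (X m) j)^2) F) \<longlonglongrightarrow> sum (\<lambda>j. (vec (X n) j - y j)^2) F"
        by (intro tendsto_intros y)
      show "\<exists>M. \<forall>m\<ge>M. sum (\<lambda>j. (vec (X n) j - vec (X m) j)^2) F \<le> e^2"
      proof (intro exI allI impI)
        fix m assume "m \<ge> N"
        have "sum (\<lambda>j. (vec (X n) j - vec (X m) j)^2) F = sum (\<lambda>j. (vec (X n - X m) j)^2) F" by simp
        also have "\<dots> \<le> infsum (\<lambda>j. (vec (X n - X m) j)^2) UNIV"
          using sqs_vec[of "X n - X m"] unfolding sqs_def
          by (intro finite_sum_le_infsum) (auto simp: \<open>finite F\<close>)
        also have "\<dots> = (dist (X n) (X m))^2" by (simp add: norm_sq_ell2 dist_norm)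
        also have "\<dots> \<le> e^2" using N \<open>m \<ge> N\<close> \<open>n \<ge> N\<close>
          by (intro power_mono) (auto intro: less_imp_le)
        finally show "sum (\<lambda>j. (vec (X n) j - vec (X m) j)^2) F \<le> e^2" .
      qed
    qed
    have "sqs (\<lambda>j. vec (X n) j - y j) \<and> infsum (\<lambda>j. (vec (X n) j - y j)^2) UNIV \<le> e^2" if "n \<ge> N" for n
    proof
      show s: "sqs (\<lambda>j. vec (X n) j - y j)" unfolding sqs_def
        by (rule nonneg_bdd_above_summable_on) (auto intro!: bdd_aboveI2 fin[OF that])
      show "infsum (\<lambda>j. (vec (X n) j - y j)^2) UNIV \<le> e^2"
        using s unfolding sqs_def by (rule infsum_le_finite_sums) (auto intro: fin[OF that])
    qed
    then show ?thesis by blast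
  qed
  obtain N0 where N0: "\<forall>n\<ge>N0. sqs (\<lambda>j. vec (X n) j - y j)" using key[of 1] by auto
  have "sqs (\<lambda>j. vec (X N0) j - (vec (X N0) j - y j))"
    by (rule sqs_diff[OF sqs_vec]) (use N0 in auto)
  then have sy: "sqs y" by simp
  define Y where "Y = Abs_ell2 y"
  have vY: "vec Y = y" using sy by (simp add: Y_def Abs_ell2_inverse)
  have "X \<longlonglongrightarrow> Y"
  proof (rule metric_LIMSEQ_I)
    fix r :: real assume "0 < r"
    then obtain N where N: "\<forall>n\<ge>N. sqs (\<lambda>j. vec (X n) j - y j) \<and> infsum (\<lambda>j. (vec (X n) j - y j)^2) UNIV \<le> (r/2)^2"
      using key[of "r/2"] by auto
    have "dist (X n) Y < r" if "n \<ge> N" for n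
    proof -
      have "(dist (X n) Y)^2 = (norm (X n - Y))^2" by (simp only: dist_norm)
      also have "\<dots> = infsum (\<lambda>j. (vec (X n - Y) j)^2) UNIV" by (rule norm_sq_ell2)
      also have "\<dots> = infsum (\<lambda>j. (vec (X n) j - y j)^2) UNIV" by (simp only: minus_ell2.rep_eq vY)
      also have "\<dots> \<le> (r/2)^2" using N that by blast
      finally have "(dist (X n) Y)^2 \<le> (r/2)^2" .
      then have "dist (X n) Y \<le> r/2"
        by (rule power2_le_imp_le) (use \<open>0<r\<close> in simp)
      then show ?thesis using \<open>0<r\<close> by simp
    qed
    then show "\<exists>no. \<forall>n\<ge>no. dist (X n) Y < r" by blast
  qed
  then show "convergent X" by (rule convergentI)
qed

instance ell2 :: banach ..


lift_definition pmul :: "ell2 \<Rightarrow> ell2 \<Rightarrow> ell2" is "\<lambda>f g j. f j * g j" by (rule sqs_mult)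

lift_definition sh :: "int \<Rightarrow> ell2 \<Rightarrow> ell2" is "\<lambda>n f j. f (j + n)" by (rule sqs_shift)

lemmas vec_ops2[simp] = pmul.rep_eq sh.rep_eq

lemma norm_pmul: "norm (pmul a b) \<le> norm a * norm b"
proof -
  have "(norm (pmul a b))^2 = infsum (\<lambda>j. (vec a j * vec b j)^2) UNIV" by (simp add: norm_sq_ell2)
  also have "\<dots> \<le> infsum (\<lambda>j. (norm a)^2 * (vec b j)^2) UNIV"
  proof (rule infsum_mono)
    show "(\<lambda>j. (vec a j * vec b j)^2) summable_on UNIV" using sqs_vec[of "pmul a b"] by (simp add: sqs_def)
    show "(\<lambda>j. (norm a)^2 * (vec b j)^2) summable_on UNIV" using sqs_vec[of b]
      by (intro summable_on_cmult_right) (simp add: sqs_def)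
    show "(vec a j * vec b j)^2 \<le> (norm a)^2 * (vec b j)^2" for j
    proof -
      have "\<bar>vec a j\<bar>^2 \<le> (norm a)^2" by (rule power_mono[OF vec_le_norm abs_ge_zero])
      then have "(vec a j)^2 \<le> (norm a)^2" by simp
      then have "(vec a j)^2 * (vec b j)^2 \<le> (norm a)^2 * (vec b j)^2" by (rule mult_right_mono) simp
      then show ?thesis by (simp only: power_mult_distrib)
    qed
  qed
  also have "\<dots> = (norm a)^2 * infsum (\<lambda>j. (vec b j)^2) UNIV"
    by (rule infsum_cmult_right) (use sqs_vec[of b] in \<open>simp add: sqs_def\<close>)
  also have "\<dots> = (norm a * norm b)^2"
    by (simp only: norm_sq_ell2[of b, symmetric] power_mult_distrib)
  finally show ?thesis by (simp add: power2_le_iff_abs_le)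
qed

lemma pmul_add_left: "pmul (a + b) c = pmul a c + pmul b c"
  by transfer (auto simp: algebra_simps)
lemma pmul_add_right: "pmul a (b + c) = pmul a b + pmul a c"
  by transfer (auto simp: algebra_simps)
lemma pmul_diff_left: "pmul (a - b) c = pmul a c - pmul b c"
  by transfer (auto simp: algebra_simps)
lemma pmul_diff_right: "pmul a (b - c) = pmul a b - pmul a c"
  by transfer (auto simp: algebra_simps)
lemma pmul_zero[simp]: "pmul 0 a = 0" "pmul a 0 = 0"
  by (transfer; auto)+

lemma inner_pmul: "inner a (pmul b c) = inner (pmul a b) c"
  by (simp add: inner_ell2_def mult.assoc)

lemma inner_sh: "inner a (sh n b) = inner (sh (-n) a) b"
proof -
  have "inner a (sh n b) = infsum (\<lambda>j. vec a j * vec b (j + n)) UNIV" by (simp add: inner_ell2_def)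
  also have "\<dots> = infsum (\<lambda>j. vec a ((j + n) + - n) * vec b (j + n)) UNIV" by simp
  also have "\<dots> = infsum (\<lambda>j. vec a (j + - n) * vec b j) UNIV"
    by (rule infsum_shift[of "\<lambda>j. vec a (j + - n) * vec b j" n])
  also have "\<dots> = inner (sh (-n) a) b" by (simp add: inner_ell2_def)
  finally show ?thesis .
qed

lemma norm_sh[simp]: "norm (sh n a) = norm a"
proof -
  have "inner (sh n a) (sh n a) = inner a a"
    unfolding inner_ell2_def by (simp add: infsum_shift[of "\<lambda>j. vec a j * vec a j" n])
  then show ?thesis by (simp add: norm_eq_sqrt_inner)
qed

lemma sh_add: "sh n (a + b) = sh n a + sh n b" by transfer auto
lemma sh_diff: "sh n (a - b) = sh n a - sh n b" by transfer auto
lemma sh_scale: "sh n (c *\<^sub>R a) = c *\<^sub>R sh n a" by transfer auto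
lemma sh_zero[simp]: "sh n 0 = 0" by transfer auto


definition DpE :: "real \<Rightarrow> ell2 \<Rightarrow> ell2" where
  "DpE h x = (1/h) *\<^sub>R (sh 1 x - x)"
definition DmE :: "real \<Rightarrow> ell2 \<Rightarrow> ell2" where
  "DmE h x = (1/h) *\<^sub>R (x - sh (-1) x)"
definition D0E :: "real \<Rightarrow> ell2 \<Rightarrow> ell2" where
  "D0E h x = (1/(2*h)) *\<^sub>R (sh 1 x - sh (-1) x)"

lemma vec_DpE: "vec (DpE h x) = Dp h (vec x)"
  by (rule ext) (simp add: DpE_def Dp_def)
lemma vec_DmE: "vec (DmE h x) = Dm h (vec x)"
  by (rule ext) (simp add: DmE_def Dm_def)
lemma vec_D0E: "vec (D0E h x) = D0 h (vec x)"
  by (rule ext) (simp add: D0E_def D0_def)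

lemma inner_DpE: "inner x (DpE h y) = - inner (DmE h x) y"
  by (simp add: DpE_def DmE_def inner_diff_right inner_diff_left inner_sh algebra_simps)
lemma inner_DmE: "inner x (DmE h y) = - inner (DpE h x) y"
  by (simp add: DpE_def DmE_def inner_diff_right inner_diff_left inner_sh algebra_simps)
lemma inner_D0E: "inner x (D0E h y) = - inner (D0E h x) y"
  by (simp add: D0E_def inner_diff_right inner_diff_left inner_sh algebra_simps)
lemma inner_D0E_self: "inner x (D0E h x) = 0"
  using inner_D0E[of x h x] by (simp add: inner_commute)

definition powk :: "nat \<Rightarrow> ell2 \<Rightarrow> ell2" where
  "powk k u = (if k = 1 then u else pmul u u)"

definition FE :: "nat \<Rightarrow> real \<Rightarrow> real \<Rightarrow> ell2 \<Rightarrow> ell2" where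
  "FE k \<beta> h u = DpE h (D0E h (DmE h u))
     + (\<beta> * (real k + 1) / (real k + 2)) *\<^sub>R (pmul (powk k u) (D0E h u) + D0E h (pmul u (powk k u)))
     + h *\<^sub>R DpE h (DmE h (DpE h (DmE h u)))"

lemma vec_powk: "k \<in> {1,2} \<Longrightarrow> vec (powk k u) j = (vec u j)^k"
  by (auto simp: powk_def power2_eq_square)

lemma vec_FE: assumes "k \<in> {1,2}" shows "vec (FE k \<beta> h u) = Fh k \<beta> h (vec u)"
proof (rule ext)
  fix j
  have e: "(\<lambda>i. vec u i * vec (powk k u) i) = (\<lambda>i. (vec u i)^(k+1))"
    using vec_powk[OF assms] by (auto simp: power_Suc)
  have e2: "vec (pmul u (powk k u)) = (\<lambda>i. (vec u i)^(k+1))"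
    by (simp only: pmul.rep_eq e)
  have 1: "vec (DpE h (D0E h (DmE h u))) = Dp h (D0 h (Dm h (vec u)))"
    by (simp only: vec_DpE vec_D0E vec_DmE)
  have 2: "vec (pmul (powk k u) (D0E h u)) j = (vec u j)^k * D0 h (vec u) j"
    by (simp only: pmul.rep_eq vec_powk[OF assms] vec_D0E)
  have 3: "vec (D0E h (pmul u (powk k u))) = D0 h (\<lambda>i. (vec u i)^(k+1))"
    by (simp only: vec_D0E e2)
  have 4: "vec (DpE h (DmE h (DpE h (DmE h u)))) = Dp h (Dm h (Dp h (Dm h (vec u))))"
    by (simp only: vec_DpE vec_DmE)
  show "vec (FE k \<beta> h u) j = Fh k \<beta> h (vec u) j"
  proof -
    have "vec (FE k \<beta> h u) j = vec (DpE h (D0E h (DmE h u))) j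
     + (\<beta> * (real k + 1) / (real k + 2)) * (vec (pmul (powk k u) (D0E h u)) j + vec (D0E h (pmul u (powk k u))) j)
     + h * vec (DpE h (DmE h (DpE h (DmE h u)))) j"
      unfolding FE_def plus_ell2.rep_eq scaleR_ell2.rep_eq by (rule refl)
    also have "\<dots> = Fh k \<beta> h (vec u) j"
      unfolding Fh_def 1 2 3 4 by (rule refl)
    finally show ?thesis .
  qed
qed

lemma energy_FE: "inner u (FE k \<beta> h u) = h * (norm (DpE h (DmE h u)))^2"
proof -
  have a: "inner u (DpE h (D0E h (DmE h u))) = 0"
    unfolding inner_DpE[of u h] inner_D0E_self by simp
  have b1: "inner u (pmul (powk k u) (D0E h u)) = inner (pmul u (powk k u)) (D0E h u)"
    by (rule inner_pmul)
  have b2: "inner u (D0E h (pmul u (powk k u))) = - inner (pmul u (powk k u)) (D0E h u)"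
    unfolding inner_D0E[of u h] by (subst inner_commute) (rule refl)
  have b: "inner u (pmul (powk k u) (D0E h u) + D0E h (pmul u (powk k u))) = 0"
    unfolding inner_add_right b1 b2 by simp
  have c: "inner u (DpE h (DmE h (DpE h (DmE h u)))) = (norm (DpE h (DmE h u)))^2"
    unfolding inner_DpE[of u h "DmE h (DpE h (DmE h u))"] inner_DmE[of "DmE h u" h "DpE h (DmE h u)"]
    by (simp only: power2_norm_eq_inner minus_minus)
  have "inner u (FE k \<beta> h u) = inner u (DpE h (D0E h (DmE h u)))
     + (\<beta> * (real k + 1) / (real k + 2)) * inner u (pmul (powk k u) (D0E h u) + D0E h (pmul u (powk k u)))
     + h * inner u (DpE h (DmE h (DpE h (DmE h u))))"
    unfolding FE_def inner_add_right inner_scaleR_right by (rule refl)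
  also have "\<dots> = h * (norm (DpE h (DmE h u)))^2" unfolding a b c by simp
  finally show ?thesis .
qed

lemma energy_FE_nonneg: "h > 0 \<Longrightarrow> inner u (FE k \<beta> h u) \<ge> 0"
  by (simp add: energy_FE)


definition lipb :: "real \<Rightarrow> (ell2 \<Rightarrow> ell2) \<Rightarrow> real \<Rightarrow> bool" where
  "lipb R f L \<longleftrightarrow> (\<forall>u v. norm u \<le> R \<longrightarrow> norm v \<le> R \<longrightarrow> norm (f u - f v) \<le> L * norm (u - v))"
definition bnd :: "real \<Rightarrow> (ell2 \<Rightarrow> ell2) \<Rightarrow> real \<Rightarrow> bool" where
  "bnd R f B \<longleftrightarrow> (\<forall>u. norm u \<le> R \<longrightarrow> norm (f u) \<le> B)"

lemma lipbD: "lipb R f L \<Longrightarrow> norm u \<le> R \<Longrightarrow> norm v \<le> R \<Longrightarrow> norm (f u - f v) \<le> L * norm (u - v)"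
  unfolding lipb_def by blast
lemma bndD: "bnd R f B \<Longrightarrow> norm u \<le> R \<Longrightarrow> norm (f u) \<le> B"
  unfolding bnd_def by blast

lemma lipb_id: "lipb R (\<lambda>u. u) 1"
  unfolding lipb_def by simp
lemma bnd_id: "bnd R (\<lambda>u. u) R"
  unfolding bnd_def by simp

lemma lipb_add: "lipb R f A \<Longrightarrow> lipb R g B \<Longrightarrow> lipb R (\<lambda>u. f u + g u) (A + B)"
  unfolding lipb_def
proof (intro allI impI)
  fix u v :: ell2 assume f: "\<forall>u v. norm u \<le> R \<longrightarrow> norm v \<le> R \<longrightarrow> norm (f u - f v) \<le> A * norm (u - v)"
    and g: "\<forall>u v. norm u \<le> R \<longrightarrow> norm v \<le> R \<longrightarrow> norm (g u - g v) \<le> B * norm (u - v)"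
    and u: "norm u \<le> R" and v: "norm v \<le> R"
  have "norm ((f u + g u) - (f v + g v)) = norm ((f u - f v) + (g u - g v))" by (simp add: algebra_simps)
  also have "\<dots> \<le> norm (f u - f v) + norm (g u - g v)" by (rule norm_triangle_ineq)
  also have "\<dots> \<le> A * norm (u - v) + B * norm (u - v)" using f g u v by (intro add_mono) auto
  finally show "norm ((f u + g u) - (f v + g v)) \<le> (A + B) * norm (u - v)" by (simp add: algebra_simps)
qed

lemma bnd_add: "bnd R f A \<Longrightarrow> bnd R g B \<Longrightarrow> bnd R (\<lambda>u. f u + g u) (A + B)"
  unfolding bnd_def by (meson add_mono norm_triangle_le)

lemma lipb_scale: "lipb R f A \<Longrightarrow> lipb R (\<lambda>u. c *\<^sub>R f u) (\<bar>c\<bar> * A)"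
  unfolding lipb_def
proof (intro allI impI)
  fix u v :: ell2 assume f: "\<forall>u v. norm u \<le> R \<longrightarrow> norm v \<le> R \<longrightarrow> norm (f u - f v) \<le> A * norm (u - v)"
    and u: "norm u \<le> R" and v: "norm v \<le> R"
  have "norm (c *\<^sub>R f u - c *\<^sub>R f v) = \<bar>c\<bar> * norm (f u - f v)"
    by (simp add: scaleR_diff_right[symmetric] del: scaleR_diff_right)
  also have "\<dots> \<le> \<bar>c\<bar> * (A * norm (u - v))" using f u v by (intro mult_left_mono) auto
  finally show "norm (c *\<^sub>R f u - c *\<^sub>R f v) \<le> \<bar>c\<bar> * A * norm (u - v)" by (simp add: mult.assoc)
qed

lemma bnd_scale: "bnd R f A \<Longrightarrow> bnd R (\<lambda>u. c *\<^sub>R f u) (\<bar>c\<bar> * A)"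
  unfolding bnd_def by (simp add: mult_left_mono)

lemma lipb_op:
  assumes lin: "\<And>x y. T (x - y) = T x - T y" and bd: "\<And>x. norm (T x) \<le> K * norm x" and K: "0 \<le> K"
    and f: "lipb R f A"
  shows "lipb R (\<lambda>u. T (f u)) (K * A)"
  unfolding lipb_def
proof (intro allI impI)
  fix u v :: ell2 assume u: "norm u \<le> R" and v: "norm v \<le> R"
  have "norm (T (f u) - T (f v)) = norm (T (f u - f v))" by (simp add: lin)
  also have "\<dots> \<le> K * norm (f u - f v)" by (rule bd)
  also have "\<dots> \<le> K * (A * norm (u - v))" using lipbD[OF f u v] K by (rule mult_left_mono)
  finally show "norm (T (f u) - T (f v)) \<le> K * A * norm (u - v)" by (simp add: mult.assoc)
qed

lemma bnd_op:
  assumes bd: "\<And>x. norm (T x) \<le> K * norm x" and K: "0 \<le> K" and f: "bnd R f A"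
  shows "bnd R (\<lambda>u. T (f u)) (K * A)"
  unfolding bnd_def
proof (intro allI impI)
  fix u :: ell2 assume u: "norm u \<le> R"
  have "norm (T (f u)) \<le> K * norm (f u)" by (rule bd)
  also have "\<dots> \<le> K * A" using bndD[OF f u] K by (rule mult_left_mono)
  finally show "norm (T (f u)) \<le> K * A" .
qed

lemma lipb_pmul:
  assumes f: "lipb R f A" and fb: "bnd R f Bf" and g: "lipb R g B" and gb: "bnd R g Bg"
  shows "lipb R (\<lambda>u. pmul (f u) (g u)) (Bf * B + A * Bg)"
  unfolding lipb_def
proof (intro allI impI)
  fix u v :: ell2 assume u: "norm u \<le> R" and v: "norm v \<le> R"
  have e: "pmul (f u) (g u) - pmul (f v) (g v) = pmul (f u) (g u - g v) + pmul (f u - f v) (g v)"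
    by (simp add: pmul_diff_left pmul_diff_right)
  have 1: "norm (pmul (f u) (g u - g v)) \<le> Bf * (B * norm (u - v))"
  proof -
    have "norm (pmul (f u) (g u - g v)) \<le> norm (f u) * norm (g u - g v)" by (rule norm_pmul)
    also have "\<dots> \<le> Bf * (B * norm (u - v))"
      using bndD[OF fb u] lipbD[OF g u v] by (intro mult_mono) (auto intro: order_trans[OF norm_ge_zero])
    finally show ?thesis .
  qed
  have 2: "norm (pmul (f u - f v) (g v)) \<le> (A * norm (u - v)) * Bg"
  proof -
    have "norm (pmul (f u - f v) (g v)) \<le> norm (f u - f v) * norm (g v)" by (rule norm_pmul)
    also have "\<dots> \<le> (A * norm (u - v)) * Bg"
      using bndD[OF gb v] lipbD[OF f u v] norm_ge_zero[of "f u - f v"] by (intro mult_mono) (auto intro: order_trans[OF norm_ge_zero])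
    finally show ?thesis .
  qed
  have "norm (pmul (f u) (g u) - pmul (f v) (g v)) \<le> norm (pmul (f u) (g u - g v)) + norm (pmul (f u - f v) (g v))"
    unfolding e by (rule norm_triangle_ineq)
  also have "\<dots> \<le> Bf * (B * norm (u - v)) + (A * norm (u - v)) * Bg" using 1 2 by (rule add_mono)
  finally show "norm (pmul (f u) (g u) - pmul (f v) (g v)) \<le> (Bf * B + A * Bg) * norm (u - v)"
    by (simp add: algebra_simps)
qed

lemma bnd_pmul:
  assumes f: "bnd R f A" and g: "bnd R g B"
  shows "bnd R (\<lambda>u. pmul (f u) (g u)) (A * B)"
  unfolding bnd_def
proof (intro allI impI)
  fix u :: ell2 assume u: "norm u \<le> R"
  have "norm (pmul (f u) (g u)) \<le> norm (f u) * norm (g u)" by (rule norm_pmul)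
  also have "\<dots> \<le> A * B" using bndD[OF f u] bndD[OF g u] by (intro mult_mono) (auto intro: order_trans[OF norm_ge_zero])
  finally show "norm (pmul (f u) (g u)) \<le> A * B" .
qed

lemma lipb_mono: "lipb R f A \<Longrightarrow> A \<le> B \<Longrightarrow> lipb R f B"
  unfolding lipb_def by (meson mult_right_mono norm_ge_zero order_trans)
lemma bnd_mono: "bnd R f A \<Longrightarrow> A \<le> B \<Longrightarrow> bnd R f B"
  unfolding bnd_def by (meson order_trans)

lemma DpE_diff: "DpE h (x - y) = DpE h x - DpE h y"
  by (simp add: DpE_def sh_diff algebra_simps)
lemma DmE_diff: "DmE h (x - y) = DmE h x - DmE h y"
  by (simp add: DmE_def sh_diff algebra_simps)
lemma D0E_diff: "D0E h (x - y) = D0E h x - D0E h y"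
  by (simp add: D0E_def sh_diff algebra_simps)

lemma norm_DpE: "norm (DpE h x) \<le> (2 * \<bar>1/h\<bar>) * norm x"
proof -
  have "norm (DpE h x) = \<bar>1/h\<bar> * norm (sh 1 x - x)" by (simp add: DpE_def)
  also have "\<dots> \<le> \<bar>1/h\<bar> * (norm (sh 1 x) + norm x)" by (intro mult_left_mono norm_triangle_ineq4) simp
  finally show ?thesis by simp
qed
lemma norm_DmE: "norm (DmE h x) \<le> (2 * \<bar>1/h\<bar>) * norm x"
proof -
  have "norm (DmE h x) = \<bar>1/h\<bar> * norm (x - sh (-1) x)" by (simp add: DmE_def)
  also have "\<dots> \<le> \<bar>1/h\<bar> * (norm x + norm (sh (-1) x))" by (intro mult_left_mono norm_triangle_ineq4) simp
  finally show ?thesis by simp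
qed
lemma norm_D0E: "norm (D0E h x) \<le> (2 * \<bar>1/h\<bar>) * norm x"
proof -
  have "norm (D0E h x) = \<bar>1/(2*h)\<bar> * norm (sh 1 x - sh (-1) x)" by (simp add: D0E_def)
  also have "\<dots> \<le> \<bar>1/(2*h)\<bar> * (norm (sh 1 x) + norm (sh (-1) x))" by (intro mult_left_mono norm_triangle_ineq4) simp
  also have "\<dots> = \<bar>1/h\<bar> * norm x" by simp
  also have "\<dots> \<le> (2 * \<bar>1/h\<bar>) * norm x"
    using abs_ge_zero[of "1/h"] norm_ge_zero[of x] by (intro mult_right_mono) linarith+
  finally show ?thesis .
qed

lemma lipb_DpE: "lipb R f A \<Longrightarrow> lipb R (\<lambda>u. DpE h (f u)) ((2 * \<bar>1/h\<bar>) * A)"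
  by (rule lipb_op[OF DpE_diff norm_DpE]) auto
lemma lipb_DmE: "lipb R f A \<Longrightarrow> lipb R (\<lambda>u. DmE h (f u)) ((2 * \<bar>1/h\<bar>) * A)"
  by (rule lipb_op[OF DmE_diff norm_DmE]) auto
lemma lipb_D0E: "lipb R f A \<Longrightarrow> lipb R (\<lambda>u. D0E h (f u)) ((2 * \<bar>1/h\<bar>) * A)"
  by (rule lipb_op[OF D0E_diff norm_D0E]) auto
lemma bnd_DpE: "bnd R f A \<Longrightarrow> bnd R (\<lambda>u. DpE h (f u)) ((2 * \<bar>1/h\<bar>) * A)"
  by (rule bnd_op[OF norm_DpE]) auto
lemma bnd_DmE: "bnd R f A \<Longrightarrow> bnd R (\<lambda>u. DmE h (f u)) ((2 * \<bar>1/h\<bar>) * A)"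
  by (rule bnd_op[OF norm_DmE]) auto
lemma bnd_D0E: "bnd R f A \<Longrightarrow> bnd R (\<lambda>u. D0E h (f u)) ((2 * \<bar>1/h\<bar>) * A)"
  by (rule bnd_op[OF norm_D0E]) auto

lemma lipb_powk: assumes "0 \<le> R" shows "lipb R (\<lambda>u. powk k u) (R + R + 1)"
proof (cases "k = 1")
  case True
  then have e: "(\<lambda>u. powk k u) = (\<lambda>u. u)" by (simp add: powk_def)
  show ?thesis unfolding e using assms by (intro lipb_mono[OF lipb_id]) auto
next
  case False
  then have e: "(\<lambda>u. powk k u) = (\<lambda>u. pmul u u)" by (simp add: powk_def)
  have "lipb R (\<lambda>u. pmul u u) (R * 1 + 1 * R)"
    by (intro lipb_pmul lipb_id bnd_id)
  then show ?thesis unfolding e by (rule lipb_mono) auto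
qed

lemma bnd_powk: assumes "0 \<le> R" shows "bnd R (\<lambda>u. powk k u) (R * R + R)"
proof (cases "k = 1")
  case True
  then have e: "(\<lambda>u. powk k u) = (\<lambda>u. u)" by (simp add: powk_def)
  show ?thesis unfolding e using assms by (intro bnd_mono[OF bnd_id]) auto
next
  case False
  then have e: "(\<lambda>u. powk k u) = (\<lambda>u. pmul u u)" by (simp add: powk_def)
  have "bnd R (\<lambda>u. pmul u u) (R * R)"
    by (intro bnd_pmul bnd_id)
  then show ?thesis unfolding e by (rule bnd_mono) (use assms in auto)
qed

lemma FE_eq: "FE k \<beta> h = (\<lambda>u. DpE h (D0E h (DmE h u))
     + (\<beta> * (real k + 1) / (real k + 2)) *\<^sub>R (pmul (powk k u) (D0E h u) + D0E h (pmul u (powk k u)))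
     + h *\<^sub>R DpE h (DmE h (DpE h (DmE h u))))"
  by (rule ext) (simp only: FE_def)

lemma lipb_FE: assumes "0 \<le> R" shows "\<exists>L. lipb R (FE k \<beta> h) L"
  unfolding FE_eq
  apply (rule exI)
  apply (rule lipb_add lipb_scale lipb_DpE lipb_DmE lipb_D0E lipb_pmul lipb_id lipb_powk[OF assms]
      bnd_add bnd_scale bnd_DpE bnd_DmE bnd_D0E bnd_pmul bnd_id bnd_powk[OF assms])+
  done


definition theta :: "real \<Rightarrow> real \<Rightarrow> real" where
  "theta R r = max 0 (min 1 (2 - r / R))"

definition GE :: "nat \<Rightarrow> real \<Rightarrow> real \<Rightarrow> real \<Rightarrow> ell2 \<Rightarrow> ell2" where
  "GE k \<beta> h R u = theta R (norm u) *\<^sub>R FE k \<beta> h u"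

lemma FE_zero: "FE k \<beta> h 0 = 0"
  by (simp add: FE_def DpE_def DmE_def D0E_def powk_def)

lemma clamp_lip: "\<bar>max 0 (min 1 x) - max 0 (min 1 y)\<bar> \<le> \<bar>x - y\<bar>" for x y :: real
  by (auto simp: max_def min_def abs_if)

lemma theta_lip: assumes "R > 0" shows "\<bar>theta R a - theta R b\<bar> \<le> \<bar>a - b\<bar> / R"
proof -
  have "\<bar>theta R a - theta R b\<bar> \<le> \<bar>(2 - a / R) - (2 - b / R)\<bar>"
    unfolding theta_def by (rule clamp_lip)
  also have "(2 - a / R) - (2 - b / R) = (b - a) / R" by (simp add: diff_divide_distrib)
  also have "\<bar>(b - a) / R\<bar> = \<bar>a - b\<bar> / R" using assms by (simp add: abs_minus_commute)
  finally show ?thesis .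
qed

lemma theta_bounds: "0 \<le> theta R r" "theta R r \<le> 1"
  unfolding theta_def by auto

lemma theta_one: assumes "R > 0" "r \<le> R" shows "theta R r = 1"
proof -
  have "r / R \<le> 1" using assms by simp
  then show ?thesis unfolding theta_def by simp
qed

lemma theta_zero: assumes "R > 0" "2 * R < r" shows "theta R r = 0"
proof -
  have "2 < r / R" using assms by (simp add: field_simps)
  then show ?thesis unfolding theta_def by simp
qed

lemma GE_zero: "GE k \<beta> h R 0 = 0"
  by (simp add: GE_def FE_zero)

lemma GE_eq: "R > 0 \<Longrightarrow> norm u \<le> R \<Longrightarrow> GE k \<beta> h R u = FE k \<beta> h u"
  by (simp add: GE_def theta_one)

lemma GE_energy: "h > 0 \<Longrightarrow> 0 \<le> inner u (GE k \<beta> h R u)"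
  unfolding GE_def inner_scaleR_right
  by (intro mult_nonneg_nonneg theta_bounds energy_FE_nonneg)

lemma GE_lip_one:
  assumes R: "R > 0" and L: "0 \<le> L" and lip: "lipb (2*R) (FE k \<beta> h) L" and u: "norm u \<le> 2*R"
  shows "norm (GE k \<beta> h R u - GE k \<beta> h R v) \<le> (3*L) * norm (u - v)"
proof -
  define F where "F = FE k \<beta> h"
  define ta where "ta = theta R (norm u)"
  define tb where "tb = theta R (norm v)"
  define d where "d = norm (u - v)"
  have d0: "0 \<le> d" unfolding d_def by simp
  have Fb: "norm (F w) \<le> L * (2 * R)" if "norm w \<le> 2 * R" for w
  proof -
    have "norm (F w - F 0) \<le> L * norm (w - 0)"
      unfolding F_def by (rule lipbD[OF lip that]) (use R in simp)
    also have "\<dots> \<le> L * (2 * R)" using that L by (intro mult_left_mono) auto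
    finally show ?thesis by (simp add: F_def FE_zero)
  qed
  have tdiff: "\<bar>ta - tb\<bar> \<le> d / R"
  proof -
    have "\<bar>ta - tb\<bar> \<le> \<bar>norm u - norm v\<bar> / R" unfolding ta_def tb_def by (rule theta_lip[OF R])
    also have "\<dots> \<le> d / R" unfolding d_def using R by (intro divide_right_mono norm_triangle_ineq3) auto
    finally show ?thesis .
  qed
  have G: "GE k \<beta> h R u - GE k \<beta> h R v = ta *\<^sub>R F u - tb *\<^sub>R F v"
    by (simp add: GE_def ta_def tb_def F_def)
  show ?thesis
  proof (cases "norm v \<le> 2 * R")
    case True
    have e: "ta *\<^sub>R F u - tb *\<^sub>R F v = ta *\<^sub>R (F u - F v) + (ta - tb) *\<^sub>R F v"
      by (simp add: algebra_simps)
    have A1: "\<bar>ta\<bar> * norm (F u - F v) \<le> 1 * (L * d)"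
    proof (rule mult_mono)
      show "\<bar>ta\<bar> \<le> 1" unfolding ta_def using theta_bounds by simp
      show "norm (F u - F v) \<le> L * d" unfolding F_def d_def by (rule lipbD[OF lip u True])
    qed auto
    have A2: "\<bar>ta - tb\<bar> * norm (F v) \<le> (d / R) * (L * (2 * R))"
      using tdiff Fb[OF True] d0 R by (intro mult_mono) auto
    have A3: "(d / R) * (L * (2 * R)) = 2 * L * d" using R by (simp add: field_simps)
    have "norm (ta *\<^sub>R F u - tb *\<^sub>R F v) \<le> norm (ta *\<^sub>R (F u - F v)) + norm ((ta - tb) *\<^sub>R F v)"
      unfolding e by (rule norm_triangle_ineq)
    also have "\<dots> = \<bar>ta\<bar> * norm (F u - F v) + \<bar>ta - tb\<bar> * norm (F v)" by simp
    also have "\<dots> \<le> 1 * (L * d) + 2 * L * d" using add_mono[OF A1 A2] unfolding A3 .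
    also have "\<dots> = (3 * L) * d" by (simp add: algebra_simps)
    finally show ?thesis unfolding G d_def .
  next
    case False
    then have tb0: "tb = 0" unfolding tb_def using R by (intro theta_zero) auto
    have "norm (ta *\<^sub>R F u - tb *\<^sub>R F v) = \<bar>ta - tb\<bar> * norm (F u)" by (simp add: tb0)
    also have "\<dots> \<le> (d / R) * (L * (2 * R))"
      using tdiff Fb[OF u] d0 R by (intro mult_mono) auto
    also have "\<dots> = 2 * L * d" using R by (simp add: field_simps)
    also have "\<dots> \<le> (3 * L) * d" using L d0 by (intro mult_right_mono) auto
    finally show ?thesis unfolding G d_def .
  qed
qed

lemma GE_lip:
  assumes R: "R > 0" and L: "0 \<le> L" and lip: "lipb (2*R) (FE k \<beta> h) L"
  shows "norm (GE k \<beta> h R u - GE k \<beta> h R v) \<le> (3*L) * norm (u - v)"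
proof (cases "norm u \<le> 2 * R")
  case True
  then show ?thesis by (rule GE_lip_one[OF R L lip])
next
  case nu: False
  show ?thesis
  proof (cases "norm v \<le> 2 * R")
    case True
    have "norm (GE k \<beta> h R v - GE k \<beta> h R u) \<le> (3*L) * norm (v - u)" by (rule GE_lip_one[OF R L lip True])
    then show ?thesis by (simp add: norm_minus_commute)
  next
    case False
    have "GE k \<beta> h R u = 0" "GE k \<beta> h R v = 0"
      using nu False R by (simp_all add: GE_def theta_zero)
    then show ?thesis using L by simp
  qed
qed

lemma GE_lip_ex:
  assumes R: "R > 0"
  shows "\<exists>M>0. \<forall>u v. norm (GE k \<beta> h R u - GE k \<beta> h R v) \<le> M * norm (u - v)"
proof -
  obtain L where lip: "lipb (2*R) (FE k \<beta> h) L" using lipb_FE[of "2*R" k \<beta> h] R by auto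
  have lip': "lipb (2*R) (FE k \<beta> h) (max L 0)" by (rule lipb_mono[OF lip]) simp
  have "norm (GE k \<beta> h R u - GE k \<beta> h R v) \<le> (3 * max L 0 + 1) * norm (u - v)" for u v
  proof -
    have "norm (GE k \<beta> h R u - GE k \<beta> h R v) \<le> (3 * max L 0) * norm (u - v)"
      by (rule GE_lip[OF R _ lip']) simp
    also have "\<dots> \<le> (3 * max L 0 + 1) * norm (u - v)" by (intro mult_right_mono) auto
    finally show ?thesis .
  qed
  moreover have "3 * max L 0 + 1 > 0" by simp
  ultimately show ?thesis by blast
qed


lemma cont_int_max:
  fixes k :: "real \<Rightarrow> 'a::banach"
  assumes k: "continuous_on UNIV k"
  shows "continuous_on UNIV (\<lambda>t. integral {0..max 0 t} k)"
  unfolding continuous_on_eq_continuous_at[OF open_UNIV]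
proof (intro ballI)
  fix x :: real
  define b where "b = \<bar>x\<bar> + 1"
  have J: "continuous_on {0..b} (\<lambda>t. integral {0..t} k)"
    by (intro indefinite_integral_continuous_1 integrable_continuous_real continuous_on_subset[OF k]) auto
  have c: "continuous_on UNIV (\<lambda>t. min b (max 0 t))" by (intro continuous_intros)
  have "continuous_on UNIV (\<lambda>t. integral {0..min b (max 0 t)} k)"
    by (rule continuous_on_compose2[OF J c]) (auto simp: b_def)
  then have "continuous (at x within UNIV) (\<lambda>t. integral {0..min b (max 0 t)} k)"
    using continuous_on_eq_continuous_at[OF open_UNIV] by auto
  then show "isCont (\<lambda>t. integral {0..max 0 t} k) x"
  proof (rule continuous_transform_within[where \<delta>=1, simplified])
    fix x' :: real assume "dist x' x < 1"
    then have "max 0 x' \<le> b" unfolding b_def dist_real_def by auto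
    then show "integral {0..min b (max 0 x')} k = integral {0..max 0 x'} k" by (simp add: min_absorb2)
  qed simp
qed

lemma exp_integral_bound:
  fixes k :: "real \<Rightarrow> 'a::banach"
  assumes M: "M > 0" and k: "continuous_on UNIV k" and B: "0 \<le> B"
    and kb: "\<And>s. 0 \<le> s \<Longrightarrow> norm (k s) \<le> M * exp (2 * M * s) * B" and t: "0 \<le> t"
  shows "exp (- (2 * M) * t) * norm (integral {0..t} k) \<le> B / 2"
proof -
  have int: "((\<lambda>s. M * exp (2 * M * s) * B) has_integral (B/2 * exp (2 * M * t) - B/2 * exp (2 * M * 0))) {0..t}"
  proof (rule fundamental_theorem_of_calculus[OF t])
    fix x assume "x \<in> {0..t}"
    have "((\<lambda>s. B/2 * exp (2 * M * s)) has_real_derivative (B/2 * (exp (2 * M * x) * (2 * M)))) (at x within {0..t})"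
      by (auto intro!: derivative_eq_intros simp: algebra_simps)
    then show "((\<lambda>s. B/2 * exp (2 * M * s)) has_vector_derivative (M * exp (2 * M * x) * B)) (at x within {0..t})"
      by (simp add: has_real_derivative_iff_has_vector_derivative[symmetric] algebra_simps)
  qed
  have "norm (integral {0..t} k) \<le> integral {0..t} (\<lambda>s. M * exp (2 * M * s) * B)"
    by (rule integral_norm_bound_integral)
      (use int kb in \<open>auto intro: integrable_continuous_real continuous_on_subset[OF k]\<close>)
  also have "\<dots> = B/2 * exp (2 * M * t) - B/2" by (simp only: integral_unique[OF int]) simp
  finally have "exp (- (2 * M) * t) * norm (integral {0..t} k) \<le> exp (- (2 * M) * t) * (B/2 * exp (2 * M * t) - B/2)"
    by (rule mult_left_mono) simp
  also have "\<dots> = B/2 - B/2 * exp (- (2 * M) * t)"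
    by (simp add: algebra_simps exp_add[symmetric])
  also have "\<dots> \<le> B/2" using B by simp
  finally show ?thesis .
qed

lemma ode_global:
  fixes G :: "'a::banach \<Rightarrow> 'a" and x0 :: 'a
  assumes M: "M > 0" and lip: "\<And>u v. norm (G u - G v) \<le> M * norm (u - v)" and G0: "G 0 = 0"
  shows "\<exists>U. U 0 = x0 \<and> (\<forall>t\<ge>0. (U has_vector_derivative - G (U t)) (at t within {0..}))"
proof -
  have contG: "continuous_on UNIV G"
    by (rule lipschitz_on_continuous_on[of M]) (auto simp: lipschitz_on_def dist_norm lip M less_imp_le)
  define g where "g w s = G (exp (2 * M * s) *\<^sub>R apply_bcontfun w s)" for w :: "real \<Rightarrow>\<^sub>C 'a" and s
  have gc: "continuous_on UNIV (g w)" for w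
    unfolding g_def by (rule continuous_on_compose2[OF contG]) (auto intro!: continuous_intros)
  define Psi where "Psi w t = exp (- (2 * M) * max 0 t) *\<^sub>R (x0 - integral {0..max 0 t} (g w))" for w t
  have Psi_cont: "continuous_on UNIV (Psi w)" for w
    unfolding Psi_def by (intro continuous_intros cont_int_max[OF gc])
  have gb: "norm (g w s) \<le> M * exp (2 * M * s) * norm w" for w s
  proof -
    have "norm (g w s) = norm (g w s - G 0)" by (simp add: G0)
    also have "\<dots> \<le> M * norm (exp (2 * M * s) *\<^sub>R apply_bcontfun w s - 0)" unfolding g_def by (rule lip)
    also have "\<dots> = M * exp (2 * M * s) * norm (apply_bcontfun w s)" by simp
    also have "\<dots> \<le> M * exp (2 * M * s) * norm w" using M by (intro mult_left_mono norm_bounded) auto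
    finally show ?thesis .
  qed
  have Psi_bd: "norm (Psi w t) \<le> norm x0 + norm w / 2" for w t
  proof -
    define t' where "t' = max 0 t"
    have t0: "0 \<le> t'" by (simp add: t'_def)
    have "0 \<le> 2 * M * t'" using M t0 by simp
    then have e1: "exp (- (2 * M) * t') \<le> 1" by simp
    have I: "exp (- (2 * M) * t') * norm (integral {0..t'} (g w)) \<le> norm w / 2"
      by (rule exp_integral_bound[OF M gc norm_ge_zero _ t0]) (rule gb)
    have "norm (Psi w t) = exp (- (2 * M) * t') * norm (x0 - integral {0..t'} (g w))"
      unfolding Psi_def t'_def[symmetric] by simp
    also have "\<dots> \<le> exp (- (2 * M) * t') * (norm x0 + norm (integral {0..t'} (g w)))"
      by (intro mult_left_mono norm_triangle_ineq4) simp
    also have "\<dots> = exp (- (2 * M) * t') * norm x0 + exp (- (2 * M) * t') * norm (integral {0..t'} (g w))"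
      by (simp add: algebra_simps)
    also have "\<dots> \<le> 1 * norm x0 + norm w / 2"
      by (rule add_mono[OF mult_right_mono[OF e1 norm_ge_zero] I])
    finally show ?thesis by simp
  qed
  have Psi_bc: "Psi w \<in> bcontfun" for w by (rule bcontfun_normI[OF Psi_cont Psi_bd])
  define Phi where "Phi w = Bcontfun (Psi w)" for w
  have Phi_app: "apply_bcontfun (Phi w) = Psi w" for w unfolding Phi_def using Psi_bc by (simp add: Bcontfun_inverse)
  have contr: "dist (Phi w1) (Phi w2) \<le> (1/2) * dist w1 w2" for w1 w2
  proof (rule dist_bound)
    fix t :: real
    define t' where "t' = max 0 t"
    have t0: "0 \<le> t'" by (simp add: t'_def)
    have gi: "g w integrable_on {0..t'}" for w by (intro integrable_continuous_real continuous_on_subset[OF gc]) auto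
    have "Psi w1 t - Psi w2 t = - (exp (- (2 * M) * t') *\<^sub>R integral {0..t'} (\<lambda>s. g w1 s - g w2 s))"
      unfolding Psi_def t'_def[symmetric] Henstock_Kurzweil_Integration.integral_diff[OF gi gi]
      by (simp add: algebra_simps)
    then have "dist (apply_bcontfun (Phi w1) t) (apply_bcontfun (Phi w2) t)
        = exp (- (2 * M) * t') * norm (integral {0..t'} (\<lambda>s. g w1 s - g w2 s))"
      by (simp add: Phi_app dist_norm)
    also have "\<dots> \<le> dist w1 w2 / 2"
    proof (rule exp_integral_bound[OF M _ zero_le_dist _ t0])
      show "continuous_on UNIV (\<lambda>s. g w1 s - g w2 s)" by (intro continuous_intros gc)
      fix s :: real assume "0 \<le> s"
      have "norm (g w1 s - g w2 s) \<le> M * norm (exp (2 * M * s) *\<^sub>R apply_bcontfun w1 s - exp (2 * M * s) *\<^sub>R apply_bcontfun w2 s)"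
        unfolding g_def by (rule lip)
      also have "\<dots> = M * exp (2 * M * s) * dist (apply_bcontfun w1 s) (apply_bcontfun w2 s)"
        by (simp add: dist_norm scaleR_diff_right[symmetric] del: scaleR_diff_right)
      also have "\<dots> \<le> M * exp (2 * M * s) * dist w1 w2" using M by (intro mult_left_mono dist_bounded) auto
      finally show "norm (g w1 s - g w2 s) \<le> M * exp (2 * M * s) * dist w1 w2" .
    qed
    finally show "dist (apply_bcontfun (Phi w1) t) (apply_bcontfun (Phi w2) t) \<le> 1/2 * dist w1 w2" by simp
  qed
  obtain w where w: "Phi w = w" using banach_fix_type[of "1/2" Phi] contr by auto
  have wt: "apply_bcontfun w t = Psi w t" for t using Phi_app[of w] w by simp
  define U where "U t = exp (2 * M * t) *\<^sub>R apply_bcontfun w t" for t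
  have gU: "g w = (\<lambda>s. G (U s))" by (rule ext) (simp add: g_def U_def)
  have Ueq: "U t = x0 - integral {0..t} (\<lambda>s. G (U s))" if "0 \<le> t" for t
  proof -
    have ee: "exp (2 * M * t) * exp (- (2 * M) * t) = 1" by (simp add: exp_add[symmetric])
    have "U t = exp (2 * M * t) *\<^sub>R (exp (- (2 * M) * t) *\<^sub>R (x0 - integral {0..t} (g w)))"
      unfolding U_def wt Psi_def using that by simp
    also have "\<dots> = x0 - integral {0..t} (g w)" by (simp only: scaleR_scaleR ee scaleR_one)
    finally show ?thesis unfolding gU .
  qed
  have U0: "U 0 = x0" using Ueq[of 0] by simp
  have Ucont: "continuous_on UNIV U" unfolding U_def by (intro continuous_intros) auto
  have GUc: "continuous_on UNIV (\<lambda>s. G (U s))" by (rule continuous_on_compose2[OF contG Ucont]) auto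
  have "(U has_vector_derivative - G (U t)) (at t within {0..})" if t: "0 \<le> t" for t
  proof -
    have d1: "((\<lambda>s. integral {0..s} (\<lambda>s. G (U s))) has_vector_derivative G (U t)) (at t within {0..t+1})"
      by (rule integral_has_vector_derivative) (use t in \<open>auto intro: continuous_on_subset[OF GUc]\<close>)
    have "at t within {0..t+1} = at t within {0..}"
      by (rule at_within_nhd[where S="{t - 1<..<t + 1}"]) auto
    with d1 have d2: "((\<lambda>s. integral {0..s} (\<lambda>s. G (U s))) has_vector_derivative G (U t)) (at t within {0..})"
      by simp
    have d3: "((\<lambda>s. x0 - integral {0..s} (\<lambda>s. G (U s))) has_vector_derivative 0 - G (U t)) (at t within {0..})"
      by (intro has_vector_derivative_diff has_vector_derivative_const d2)
    show ?thesis
      by (rule has_vector_derivative_transform[of t "{0..}" U, OF _ _ d3[simplified]]) (use t Ueq in auto)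
  qed
  then show ?thesis using U0 by blast
qed


lemma l2h_sqs: "l2h z = sqs z"
  by (simp add: l2h_def sqs_def)

lemma vec_Abs: "l2h z \<Longrightarrow> vec (Abs_ell2 z) = z"
  by (simp add: l2h_sqs Abs_ell2_inverse)

lemma l2h_vec: "l2h (vec x)"
  by (simp add: l2h_sqs)

lemma norm2h_ell2: assumes "h > 0" "l2h z" shows "norm2h h z = sqrt h * norm (Abs_ell2 z)"
proof -
  have "infsum (\<lambda>j. h * (z j)^2) UNIV = h * infsum (\<lambda>j. (z j)^2) UNIV"
    by (rule infsum_cmult_right) (use assms in \<open>simp add: l2h_def\<close>)
  also have "infsum (\<lambda>j. (z j)^2) UNIV = (norm (Abs_ell2 z))^2"
    by (simp add: norm_sq_ell2 vec_Abs[OF assms(2)])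
  finally show ?thesis unfolding norm2h_def using assms by (simp add: real_sqrt_mult)
qed

lemma norm2h_vec: "h > 0 \<Longrightarrow> norm2h h (vec x) = sqrt h * norm x"
  using norm2h_ell2[of h "vec x"] by (simp add: l2h_vec vec_inverse)

lemma l2h_deriv_iff:
  assumes h: "h > 0" and us: "\<forall>s\<in>S. l2h (u s)" and t: "t \<in> S" and v: "l2h v"
  shows "has_l2h_deriv h u v t S \<longleftrightarrow>
    ((\<lambda>s. Abs_ell2 (u s)) has_vector_derivative Abs_ell2 v) (at t within S)"
proof -
  define U where "U s = Abs_ell2 (u s)" for s
  define V where "V = Abs_ell2 v"
  define Q where "Q s = norm ((U s - U t) - (s - t) *\<^sub>R V) / norm (s - t)" for s
  have vU: "vec (U s) = u s" if "s \<in> S" for s unfolding U_def using us that by (simp add: vec_Abs)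
  have vV: "vec V = v" unfolding V_def using v by (simp add: vec_Abs)
  have ev: "\<forall>\<^sub>F s in at t within S. norm2h h (\<lambda>j. (u s j - u t j) / (s - t) - v j) = sqrt h * Q s"
    unfolding eventually_at_filter
  proof (rule always_eventually, intro allI impI)
    fix s assume st: "s \<noteq> t" and sS: "s \<in> S"
    define W where "W = (1 / (s - t)) *\<^sub>R (U s - U t) - V"
    have vW: "vec W = (\<lambda>j. (u s j - u t j) / (s - t) - v j)"
      by (rule ext) (simp add: W_def vU[OF sS] vU[OF t] vV divide_inverse algebra_simps)
    have "norm2h h (\<lambda>j. (u s j - u t j) / (s - t) - v j) = sqrt h * norm W"
      unfolding vW[symmetric] by (rule norm2h_vec[OF h])
    also have "norm W = Q s"
    proof -
      have "(U s - U t) - (s - t) *\<^sub>R V = (s - t) *\<^sub>R W" using st by (simp add: W_def algebra_simps)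
      then have "norm ((U s - U t) - (s - t) *\<^sub>R V) = \<bar>s - t\<bar> * norm W" by simp
      then show ?thesis unfolding Q_def using st by simp
    qed
    finally show "norm2h h (\<lambda>j. (u s j - u t j) / (s - t) - v j) = sqrt h * Q s" .
  qed
  have "has_l2h_deriv h u v t S \<longleftrightarrow> ((\<lambda>s. sqrt h * Q s) \<longlongrightarrow> 0) (at t within S)"
    unfolding has_l2h_deriv_def using v tendsto_cong[OF ev] by simp
  also have "\<dots> \<longleftrightarrow> (Q \<longlongrightarrow> 0) (at t within S)"
    using tendsto_mult_left_iff[of "sqrt h" Q 0 "at t within S"] h by simp
  also have "\<dots> \<longleftrightarrow> (U has_vector_derivative V) (at t within S)"
    unfolding has_vector_derivative_def has_derivative_iff_norm Q_def
    by (simp add: bounded_linear_scaleR_left)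
  finally show ?thesis unfolding U_def V_def .
qed

lemma energy_decr:
  fixes U :: "real \<Rightarrow> 'a::real_inner"
  assumes ab: "a \<le> b" and d: "\<And>s. s \<in> {a..b} \<Longrightarrow> (U has_vector_derivative V s) (at s within {a..b})"
    and neg: "\<And>s. s \<in> {a..b} \<Longrightarrow> inner (U s) (V s) \<le> 0"
  shows "norm (U b) \<le> norm (U a)"
proof -
  have fd: "((\<lambda>s. inner (U s) (U s)) has_derivative (\<lambda>x. inner (U s) (x *\<^sub>R V s) + inner (x *\<^sub>R V s) (U s))) (at s within {a..b})"
    if "a \<le> s" "s \<le> b" for s
  proof -
    have D: "(U has_derivative (\<lambda>x. x *\<^sub>R V s)) (at s within {a..b})"
      using d[of s] that unfolding has_vector_derivative_def by auto
    show ?thesis by (rule has_derivative_inner[OF D D])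
  qed
  obtain x where x: "x \<in> {a..b}"
    and eq: "inner (U b) (U b) - inner (U a) (U a) = inner (U x) ((b - a) *\<^sub>R V x) + inner ((b - a) *\<^sub>R V x) (U x)"
    using mvt_very_simple[OF ab fd] by blast
  have "inner (U x) ((b - a) *\<^sub>R V x) + inner ((b - a) *\<^sub>R V x) (U x) = 2 * (b - a) * inner (U x) (V x)"
    by (simp add: inner_commute)
  also have "\<dots> \<le> 0" using neg[OF x] ab by (simp add: mult_nonneg_nonpos)
  finally have "inner (U b) (U b) \<le> inner (U a) (U a)" using eq by linarith
  then show ?thesis by (simp add: norm_eq_sqrt_inner)
qed

theorem lemma3p5:
  fixes k :: nat and \<beta> h :: real and \<phi> :: "int \<Rightarrow> real"
  assumes "k \<in> {1,2}" and "\<beta> \<noteq> 0" and "h > 0" and "l2h \<phi>"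
  shows "(\<forall>T u. T > 0 \<longrightarrow> is_solution k \<beta> h \<phi> {0..<T} u \<longrightarrow>
            (\<forall>t\<in>{0<..<T}. norm2h h (u t) \<le> norm2h h \<phi>))
       \<and> (\<exists>u. is_solution k \<beta> h \<phi> {0..} u \<and>
            (\<forall>t>0. norm2h h (u t) \<le> norm2h h \<phi>))"
proof -
  have h0: "h > 0" using assms(3) .
  define pe where "pe = Abs_ell2 \<phi>"
  have vphi: "vec pe = \<phi>" using assms(4) by (simp add: pe_def vec_Abs)
  have normphi: "norm2h h \<phi> = sqrt h * norm pe" using norm2h_ell2[OF h0 assms(4)] by (simp add: pe_def)
  have vFE: "vec (FE k \<beta> h x) = Fh k \<beta> h (vec x)" for x by (rule vec_FE[OF assms(1)])
  have vnF: "(\<lambda>j. - Fh k \<beta> h (vec x) j) = vec (- FE k \<beta> h x)" for x by (simp add: vFE)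
  have AbsF: "Abs_ell2 (\<lambda>j. - Fh k \<beta> h (vec x) j) = - FE k \<beta> h x" for x
    unfolding vnF by (rule vec_inverse)
  have lF: "l2h (\<lambda>j. - Fh k \<beta> h (vec x) j)" for x unfolding vnF by (rule l2h_vec)
  have P1: "\<forall>T u. T > 0 \<longrightarrow> is_solution k \<beta> h \<phi> {0..<T} u \<longrightarrow>
            (\<forall>t\<in>{0<..<T}. norm2h h (u t) \<le> norm2h h \<phi>)"
  proof (intro allI impI ballI)
    fix T :: real and u :: "real \<Rightarrow> int \<Rightarrow> real" and t :: real
    assume T: "T > 0" and sol: "is_solution k \<beta> h \<phi> {0..<T} u" and t: "t \<in> {0<..<T}"
    from sol have u0: "u 0 = \<phi>"
      and us: "\<And>s. s \<in> {0..<T} \<Longrightarrow> l2h (u s) \<and> has_l2h_deriv h u (\<lambda>j. - Fh k \<beta> h (u s) j) s {0..<T}"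
      unfolding is_solution_def by auto
    define U where "U s = Abs_ell2 (u s)" for s
    have Ufun: "(\<lambda>s. Abs_ell2 (u s)) = U" by (simp add: U_def fun_eq_iff)
    have vU: "vec (U s) = u s" if "s \<in> {0..<T}" for s using us[OF that] by (simp add: U_def vec_Abs)
    have dU: "(U has_vector_derivative - FE k \<beta> h (U s)) (at s within {0..<T})" if s: "s \<in> {0..<T}" for s
    proof -
      have e: "(\<lambda>j. - Fh k \<beta> h (u s) j) = (\<lambda>j. - Fh k \<beta> h (vec (U s)) j)" by (simp add: vU[OF s])
      have l: "l2h (\<lambda>j. - Fh k \<beta> h (u s) j)" unfolding e by (rule lF)
      have "has_l2h_deriv h u (\<lambda>j. - Fh k \<beta> h (u s) j) s {0..<T}" using us[OF s] by blast
      then have "((\<lambda>s. Abs_ell2 (u s)) has_vector_derivative Abs_ell2 (\<lambda>j. - Fh k \<beta> h (u s) j)) (at s within {0..<T})"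
        using l2h_deriv_iff[OF h0 _ s l] us by blast
      then show ?thesis unfolding Ufun e AbsF .
    qed
    have t0: "0 \<le> t" "t < T" using t by auto
    have "norm (U t) \<le> norm (U 0)"
    proof (rule energy_decr[of 0 t U "\<lambda>s. - FE k \<beta> h (U s)"])
      show "0 \<le> t" by fact
      show "(U has_vector_derivative - FE k \<beta> h (U s)) (at s within {0..t})" if "s \<in> {0..t}" for s
        using that t0 by (intro has_vector_derivative_within_subset[OF dU]) auto
      show "inner (U s) (- FE k \<beta> h (U s)) \<le> 0" if "s \<in> {0..t}" for s
        using energy_FE_nonneg[OF h0, of "U s" k \<beta>] by simp
    qed
    moreover have "U 0 = pe" by (simp add: U_def u0 pe_def)
    moreover have "norm2h h (u t) = sqrt h * norm (U t)"
      using norm2h_ell2[OF h0, of "u t"] us[of t] t0 by (simp add: U_def)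
    ultimately show "norm2h h (u t) \<le> norm2h h \<phi>"
      unfolding normphi using h0 by (auto intro!: mult_left_mono)
  qed
  have P2: "\<exists>u. is_solution k \<beta> h \<phi> {0..} u \<and> (\<forall>t>0. norm2h h (u t) \<le> norm2h h \<phi>)"
  proof -
    define R where "R = norm pe + 1"
    have R: "R > 0" unfolding R_def by (simp add: add_nonneg_pos)
    obtain M where M: "M > 0" and lip: "\<forall>u v. norm (GE k \<beta> h R u - GE k \<beta> h R v) \<le> M * norm (u - v)"
      using GE_lip_ex[OF R] by blast
    obtain U where U0: "U 0 = pe"
      and dU: "\<forall>t\<ge>0. (U has_vector_derivative - GE k \<beta> h R (U t)) (at t within {0..})"
      using ode_global[of M "GE k \<beta> h R" pe] M lip GE_zero by blast
    have nb: "norm (U t) \<le> norm pe" if t: "0 \<le> t" for t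
    proof -
      have "norm (U t) \<le> norm (U 0)"
      proof (rule energy_decr[of 0 t U "\<lambda>s. - GE k \<beta> h R (U s)"])
        show "0 \<le> t" by fact
        show "(U has_vector_derivative - GE k \<beta> h R (U s)) (at s within {0..t})" if "s \<in> {0..t}" for s
        proof -
          have "s \<ge> 0" using that by simp
          then have "(U has_vector_derivative - GE k \<beta> h R (U s)) (at s within {0..})" using dU by blast
          then show ?thesis by (rule has_vector_derivative_within_subset) auto
        qed
        show "inner (U s) (- GE k \<beta> h R (U s)) \<le> 0" if "s \<in> {0..t}" for s
          using GE_energy[OF h0, of "U s" k \<beta> R] by simp
      qed
      then show ?thesis using U0 by simp
    qed
    have GF: "GE k \<beta> h R (U t) = FE k \<beta> h (U t)" if "0 \<le> t" for t
      using nb[OF that] R by (intro GE_eq) (auto simp: R_def)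
    define u where "u t = vec (U t)" for t
    have Ufun: "(\<lambda>s. Abs_ell2 (u s)) = U" by (simp add: u_def fun_eq_iff vec_inverse)
    have sol: "is_solution k \<beta> h \<phi> {0..} u"
      unfolding is_solution_def
    proof (intro conjI ballI)
      show "u 0 = \<phi>" by (simp add: u_def U0 vphi)
      fix t :: real assume t: "t \<in> {0..}"
      show "l2h (u t)" by (simp add: u_def l2h_vec)
      have l: "l2h (\<lambda>j. - Fh k \<beta> h (u t) j)" unfolding u_def by (rule lF)
      have "(U has_vector_derivative - FE k \<beta> h (U t)) (at t within {0..})"
        using dU GF t by auto
      then have "((\<lambda>s. Abs_ell2 (u s)) has_vector_derivative Abs_ell2 (\<lambda>j. - Fh k \<beta> h (u t) j)) (at t within {0..})"
        unfolding u_def AbsF vec_inverse .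
      then show "has_l2h_deriv h u (\<lambda>j. - Fh k \<beta> h (u t) j) t {0..}"
        using l2h_deriv_iff[OF h0 _ t l] by (simp add: u_def l2h_vec)
    qed
    have "norm2h h (u t) \<le> norm2h h \<phi>" if "t > 0" for t
    proof -
      have "norm2h h (u t) = sqrt h * norm (U t)" by (simp add: u_def norm2h_vec[OF h0])
      also have "\<dots> \<le> sqrt h * norm pe" using nb[of t] that h0 by (intro mult_left_mono) auto
      finally show ?thesis unfolding normphi .
    qed
    then show ?thesis using sol by blast
  qed
  show ?thesis using P1 P2 by blast
qed


end
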